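(* Let $q$ be a positive integer and suppose that for each divisor $d$ of $q$ we are given a function $a_d:\mathbb Z\to\mathbb C$ of period $d$ with $|a_d(n)|\le1$ for all $n$, such that $a_{d_1d_2}(n)=a_{d_1}(n)a_{d_2}(n)$ whenever $d_1d_2\mid q$ and $\gcd(d_1,d_2)=1$. If $I$ is an interval of length $N$, then $$\frac1N\Big|\sum_{n\in I}a_q(n)\Big|\ll\Big(1+\frac{q\log q}{N}\Big)\prod_{p^e\| q}\ \max_{b\bmod p^e}\Big|\frac1{p^e}\sum_{r\bmod p^e}a_{p^e}(r)\,e\Big(\frac{br}{p^e}\Big)\Big|.$$
   Context: $e(x)=e^{2\pi i x}$; the sum over $I$ is over integers; the implied constant is absolute. *)

theory Defs
  imports "HOL-Analysis.Analysis" "HOL-Computational_Algebra.Primes"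
begin

definition ee :: "real \<Rightarrow> complex" where
  "ee x = exp (2 * of_real pi * \<i> * of_real x)"

end

theory Submission
  imports Defs "HOL-Analysis.Harmonic_Numbers"
begin

lemma ee_cis: "ee x = cis (2 * pi * x)"
  unfolding ee_def by (simp add: cis_conv_exp mult_ac)

lemma ee_add: "ee (x + y) = ee x * ee y"
  by (simp add: ee_cis cis_mult distrib_left)

lemma ee_int: "ee (of_int k) = 1"
proof -
  have "of_int k \<in> (\<int>::real set)" by simp
  then show ?thesis unfolding ee_cis by (rule cis_multiple_2pi)
qed

lemma norm_ee [simp]: "norm (ee x) = 1"
  by (simp add: ee_cis)

lemma ee_pow: "ee x ^ n = ee (real n * x)"
  by (simp only: ee_cis Complex.DeMoivre) (simp add: mult_ac)

lemma ee_minus: "ee (- x) = cnj (ee x)"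
  by (simp add: ee_cis cis_cnj)

lemma ee_eq_1: "ee x = 1 \<Longrightarrow> x \<in> \<int>"
proof -
  assume "ee x = 1"
  then have "exp (complex_of_real (2 * pi * x) * \<i>) = 1" unfolding ee_def by (simp add: mult_ac)
  then obtain n :: int where "2 * pi * x = of_int (2 * n) * pi"
    unfolding exp_eq_1 by auto
  then have "x = of_int n" by simp
  then show ?thesis by simp
qed

lemma ee_cong:
  fixes x y :: int and d :: nat
  assumes "d > 0" "int d dvd (x - y)"
  shows "ee (of_int x / real d) = ee (of_int y / real d)"
proof -
  obtain k where k: "x - y = int d * k" using assms(2) by (auto simp: dvd_def)
  have "of_int x / real d = of_int y / real d + of_int k"
    using k assms(1) by (simp add: field_simps)
  then show ?thesis by (simp add: ee_add ee_int)
qed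

lemma norm_ee_sub1: "norm (ee x - 1) = 2 * \<bar>sin (pi * x)\<bar>"
proof -
  have "ee x = exp (\<i> * complex_of_real (2 * pi * x))"
    unfolding ee_def by (simp add: mult_ac)
  then show ?thesis using dist_exp_i_1[of "2 * pi * x"] by simp
qed

lemma per_mult:
  fixes f :: "int \<Rightarrow> 'a"
  assumes "\<forall>n. f (n + c) = f n" shows "f (n + k * c) = f n"
proof (induction k arbitrary: n rule: int_induct[where k=0])
  case base then show ?case by simp
next
  case (step1 i) then show ?case using assms
    by (metis add.assoc distrib_right mult_1)
next
  case (step2 i)
  have "f (n + (i - 1) * c) = f (n + (i - 1) * c + c)" using assms by simp
  also have "\<dots> = f (n + i * c)" by (simp add: algebra_simps)
  finally show ?case using step2 by simp
qed

lemma per_mod: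
  fixes f :: "int \<Rightarrow> 'a"
  assumes "\<forall>n. f (n + int d) = f n" shows "f (n mod int d) = f n"
proof -
  have "f (n mod int d + (n div int d) * int d) = f (n mod int d)"
    by (rule per_mult[OF assms])
  then show ?thesis by simp
qed

lemma sum_int_range: "(\<Sum>b\<in>{0..<int d}. g b) = (\<Sum>j<d. g (int j))"
proof -
  have "{0..<int d} = int ` {..<d}" using image_int_atLeastLessThan[of 0 d] by (simp add: atLeast0LessThan)
  then show ?thesis by (simp add: sum.reindex)
qed

lemma orth:
  fixes k :: int and d :: nat
  assumes "d > 0"
  shows "(\<Sum>b\<in>{0..<int d}. ee (of_int (b * k) / real d)) = (if int d dvd k then of_nat d else 0)"
proof -
  define z where "z = ee (of_int k / real d)"
  have "(\<Sum>b\<in>{0..<int d}. ee (of_int (b * k) / real d)) = (\<Sum>j<d. z ^ j)"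
    unfolding sum_int_range z_def ee_pow by (simp add: field_simps)
  also have "\<dots> = (if z = 1 then of_nat d else (1 - z ^ d) / (1 - z))"
    by (rule sum_gp_strict)
  also have "\<dots> = (if int d dvd k then of_nat d else 0)"
  proof (cases "int d dvd k")
    case True
    then obtain m where "k = int d * m" by auto
    then have "z = 1" unfolding z_def using assms by (simp add: ee_int)
    then show ?thesis using True by simp
  next
    case False
    have "z \<noteq> 1"
    proof
      assume "z = 1"
      then have "of_int k / real d \<in> \<int>" unfolding z_def by (rule ee_eq_1)
      then obtain m where m: "of_int k / real d = of_int m" by (auto elim: Ints_cases)
      then have "of_int k = real_of_int (int d * m)" using assms by (simp add: field_simps)
      then have "k = int d * m" by linarith
      then show False using False by auto
    qed
    moreover have "z ^ d = 1" unfolding z_def ee_pow using assms by (simp add: ee_int)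
    ultimately show ?thesis using False by simp
  qed
  finally show ?thesis .
qed

definition fc :: "nat \<Rightarrow> (int \<Rightarrow> complex) \<Rightarrow> int \<Rightarrow> complex" where
  "fc d f b = complex_of_real (1 / real d) *
     (\<Sum>r\<in>{0..<int d}. f r * ee (real_of_int (b * r) / real d))"

definition FM :: "nat \<Rightarrow> (int \<Rightarrow> complex) \<Rightarrow> real" where
  "FM d f = Max ((\<lambda>b::int. norm (fc d f b)) ` {0..<int d})"

lemma fc_mod:
  assumes "d > 0" shows "fc d f (b mod int d) = fc d f b"
proof -
  have "ee (real_of_int (b mod int d * r) / real d) = ee (real_of_int (b * r) / real d)" for r
  proof (rule ee_cong[OF assms])
    have "int d dvd b mod int d - b" by (simp add: mod_eq_dvd_iff[symmetric])
    then have "int d dvd (b mod int d - b) * r" by (rule dvd_mult2)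
    then show "int d dvd b mod int d * r - b * r" by (simp add: left_diff_distrib)
  qed
  then show ?thesis unfolding fc_def by simp
qed

lemma norm_fc_le_FM:
  assumes "d > 0" shows "norm (fc d f b) \<le> FM d f"
proof -
  have "b mod int d \<in> {0..<int d}" using assms by simp
  then have "norm (fc d f (b mod int d)) \<le> FM d f" unfolding FM_def by (intro Max_ge) auto
  then show ?thesis using fc_mod[OF assms] by simp
qed

lemma FM_nonneg: "d > 0 \<Longrightarrow> 0 \<le> FM d f"
  using norm_fc_le_FM[of d f 0] norm_ge_zero[of "fc d f 0"] by linarith

lemma inversion:
  assumes "d > 0" and per: "\<forall>n. f (n + int d) = f n"
  shows "f n = (\<Sum>b\<in>{0..<int d}. fc d f b * ee (of_int (- (b * n)) / real d))"
proof -
  have key: "\<And>r. r \<in> {0..<int d} \<Longrightarrow> (int d dvd r - n) = (r = n mod int d)"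
  proof -
    fix r assume r: "r \<in> {0..<int d}"
    then have "r mod int d = r" by simp
    then show "(int d dvd r - n) = (r = n mod int d)"
      by (metis mod_eq_dvd_iff)
  qed
  have "(\<Sum>b\<in>{0..<int d}. fc d f b * ee (of_int (- (b * n)) / real d))
      = (\<Sum>b\<in>{0..<int d}. \<Sum>r\<in>{0..<int d}. complex_of_real (1 / real d) * f r * ee (of_int (b * (r - n)) / real d))"
  proof (rule sum.cong[OF refl])
    fix b
    have "ee (real_of_int (b * r) / real d) * ee (of_int (- (b * n)) / real d)
        = ee (of_int (b * (r - n)) / real d)" for r
      by (simp add: ee_add[symmetric] algebra_simps diff_divide_distrib)
    then show "fc d f b * ee (of_int (- (b * n)) / real d) =
        (\<Sum>r\<in>{0..<int d}. complex_of_real (1 / real d) * f r * ee (of_int (b * (r - n)) / real d))"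
      unfolding fc_def sum_distrib_left sum_distrib_right by (simp add: mult_ac)
  qed
  also have "\<dots> = (\<Sum>r\<in>{0..<int d}. complex_of_real (1 / real d) * f r * (\<Sum>b\<in>{0..<int d}. ee (of_int (b * (r - n)) / real d)))"
    by (subst sum.swap) (simp add: sum_distrib_left)
  also have "\<dots> = (\<Sum>r\<in>{0..<int d}. if r = n mod int d then f r else 0)"
  proof (rule sum.cong[OF refl])
    fix r assume r: "r \<in> {0..<int d}"
    show "complex_of_real (1 / real d) * f r * (\<Sum>b\<in>{0..<int d}. ee (of_int (b * (r - n)) / real d)) = (if r = n mod int d then f r else 0)"
      unfolding orth[OF assms(1)] key[OF r] using assms(1) by simp
  qed
  also have "\<dots> = f (n mod int d)"
    using assms(1) by (simp add: sum.delta)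
  also have "\<dots> = f n" by (rule per_mod[OF per])
  finally show ?thesis by simp
qed

lemma crt_bij:
  assumes "m > 0" "n > 0" "coprime m n"
  shows "bij_betw (\<lambda>r. (r mod int m, r mod int n)) {0..<int (m*n)} ({0..<int m} \<times> {0..<int n})"
proof -
  let ?h = "\<lambda>r. (r mod int m, r mod int n)"
  have cop: "coprime (int m) (int n)" using assms(3) by simp
  have inj: "inj_on ?h {0..<int (m*n)}"
  proof (rule inj_onI)
    fix r r' assume r: "r \<in> {0..<int (m*n)}" and r': "r' \<in> {0..<int (m*n)}" and eq: "?h r = ?h r'"
    have "int m dvd r - r'" "int n dvd r - r'" using eq by (auto simp: mod_eq_dvd_iff)
    then have dv: "int m * int n dvd r - r'" using cop by (rule divides_mult)
    show "r = r'"
    proof (rule ccontr)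
      assume "r \<noteq> r'"
      then have "r - r' \<noteq> 0" by simp
      from dvd_imp_le_int[OF this dv] have "\<bar>int m * int n\<bar> \<le> \<bar>r - r'\<bar>" .
      moreover have "\<bar>r - r'\<bar> < int m * int n" using r r' by auto
      ultimately show False using assms by simp
    qed
  qed
  have sub: "?h ` {0..<int (m*n)} \<subseteq> {0..<int m} \<times> {0..<int n}" using assms by auto
  have "card (?h ` {0..<int (m*n)}) = card ({0..<int m} \<times> {0..<int n})"
    using card_image[OF inj] by (simp add: card_cartesian_product flip: of_nat_mult)
  then have "?h ` {0..<int (m*n)} = {0..<int m} \<times> {0..<int n}"
    using sub by (intro card_subset_eq) auto
  then show ?thesis using inj by (simp add: bij_betw_def)
qed

lemma fc_mult:
  assumes "m > 0" "n > 0" "coprime m n"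
    and perf: "\<forall>x. f (x + int m) = f x" and perg: "\<forall>x. g (x + int n) = g x"
    and bez: "u' * int n + v' * int m = 1"
  shows "fc (m*n) (\<lambda>r. f r * g r) b = fc m f (b * u') * fc n g (b * v')"
proof -
  define F1 where "F1 s = f s * ee (of_int (b * u' * s) / real m)" for s
  define G1 where "G1 t = g t * ee (of_int (b * v' * t) / real n)" for t
  have trm: "f r * g r * ee (of_int (b * r) / real (m*n)) = F1 (r mod int m) * G1 (r mod int n)" for r
  proof -
    have "real_of_int (b * r) = real_of_int (b * r * (u' * int n + v' * int m))" using bez by simp
    then have "of_int (b * r) / real (m*n) = of_int (b * u' * r) / real m + of_int (b * v' * r) / real n"
      using assms(1,2) by (simp add: field_simps)
    then have e1: "ee (of_int (b * r) / real (m*n)) = ee (of_int (b * u' * r) / real m) * ee (of_int (b * v' * r) / real n)"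
      by (simp add: ee_add)
    have e2: "ee (of_int (b * u' * r) / real m) = ee (of_int (b * u' * (r mod int m)) / real m)"
    proof (rule ee_cong[OF assms(1)])
      have "int m dvd r - r mod int m" by (simp add: mod_eq_dvd_iff[symmetric])
      then have "int m dvd b * u' * (r - r mod int m)" by (rule dvd_mult)
      then show "int m dvd b * u' * r - b * u' * (r mod int m)" by (simp add: right_diff_distrib)
    qed
    have e3: "ee (of_int (b * v' * r) / real n) = ee (of_int (b * v' * (r mod int n)) / real n)"
    proof (rule ee_cong[OF assms(2)])
      have "int n dvd r - r mod int n" by (simp add: mod_eq_dvd_iff[symmetric])
      then have "int n dvd b * v' * (r - r mod int n)" by (rule dvd_mult)
      then show "int n dvd b * v' * r - b * v' * (r mod int n)" by (simp add: right_diff_distrib)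
    qed
    show ?thesis unfolding F1_def G1_def e1 e2 e3 per_mod[OF perf] per_mod[OF perg]
      by (simp add: mult_ac)
  qed
  have "(\<Sum>r\<in>{0..<int (m*n)}. f r * g r * ee (of_int (b * r) / real (m*n)))
      = (\<Sum>r\<in>{0..<int (m*n)}. (\<lambda>(s,t). F1 s * G1 t) (r mod int m, r mod int n))"
    using trm by simp
  also have "\<dots> = (\<Sum>z\<in>{0..<int m} \<times> {0..<int n}. (\<lambda>(s,t). F1 s * G1 t) z)"
    by (rule sum.reindex_bij_betw[OF crt_bij[OF assms(1-3)]])
  also have "\<dots> = (\<Sum>s\<in>{0..<int m}. F1 s) * (\<Sum>t\<in>{0..<int n}. G1 t)"
    by (simp add: sum_product sum.cartesian_product)
  finally have "(\<Sum>r\<in>{0..<int (m*n)}. f r * g r * ee (of_int (b * r) / real (m*n))) =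
     (\<Sum>s\<in>{0..<int m}. F1 s) * (\<Sum>t\<in>{0..<int n}. G1 t)" .
  then show ?thesis unfolding fc_def F1_def G1_def by (simp add: mult_ac)
qed

lemma FM_mult:
  assumes "m > 0" "n > 0" "coprime m n"
    and perf: "\<forall>x. f (x + int m) = f x" and perg: "\<forall>x. g (x + int n) = g x"
  shows "FM (m*n) (\<lambda>r. f r * g r) \<le> FM m f * FM n g"
proof -
  have "gcd (int n) (int m) = 1" using assms(3) by (simp add: coprime_iff_gcd_eq_1 gcd.commute)
  then obtain u v where bez: "u * int n + v * int m = 1" using bezout_int[of "int n" "int m"] by auto
  show ?thesis unfolding FM_def[of "m*n"]
  proof (rule Max.boundedI)
    show "finite ((\<lambda>b. cmod (fc (m * n) (\<lambda>r. f r * g r) b)) ` {0..<int (m * n)})" by simp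
    show "(\<lambda>b. cmod (fc (m * n) (\<lambda>r. f r * g r) b)) ` {0..<int (m * n)} \<noteq> {}" using assms by simp
    fix x assume "x \<in> (\<lambda>b. cmod (fc (m * n) (\<lambda>r. f r * g r) b)) ` {0..<int (m * n)}"
    then obtain b where x: "x = cmod (fc (m * n) (\<lambda>r. f r * g r) b)" by auto
    have "x = cmod (fc m f (b * u)) * cmod (fc n g (b * v))"
      unfolding x fc_mult[OF assms bez] norm_mult ..
    also have "\<dots> \<le> FM m f * FM n g"
      by (intro mult_mono norm_fc_le_FM assms FM_nonneg norm_ge_zero)
    finally show "x \<le> FM m f * FM n g" .
  qed
qed

lemma FM_one: "FM (Suc 0) f = norm (f 0)"
proof -
  have "{0..<1::int} = {0}" by auto
  then show ?thesis by (simp add: FM_def fc_def ee_def)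
qed

lemma FM_prod:
  fixes q :: nat and a :: "nat \<Rightarrow> int \<Rightarrow> complex"
  assumes q: "q > 0"
    and per: "\<forall>d n. d dvd q \<longrightarrow> a d (n + int d) = a d n"
    and bnd: "\<forall>d n. d dvd q \<longrightarrow> norm (a d n) \<le> 1"
    and mult: "\<forall>d1 d2 n. d1 * d2 dvd q \<longrightarrow> coprime d1 d2 \<longrightarrow> a (d1 * d2) n = a d1 n * a d2 n"
    and A: "A \<subseteq> prime_factors q"
  shows "FM (\<Prod>p\<in>A. p ^ multiplicity p q) (a (\<Prod>p\<in>A. p ^ multiplicity p q))
     \<le> (\<Prod>p\<in>A. FM (p ^ multiplicity p q) (a (p ^ multiplicity p q)))"
proof -
  have fin: "finite A" using A finite_subset by blast
  have dv: "(\<Prod>p\<in>B. p ^ multiplicity p q) dvd q" if "B \<subseteq> prime_factors q" for B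
  proof -
    have "(\<Prod>p\<in>B. p ^ multiplicity p q) dvd (\<Prod>p\<in>prime_factors q. p ^ multiplicity p q)"
      using that by (intro prod_dvd_prod_subset) auto
    then show ?thesis using prime_factorization_nat[OF q] by simp
  qed
  have pos: "(\<Prod>p\<in>B. p ^ multiplicity p q) > 0" if "B \<subseteq> prime_factors q" for B
    using that by (intro prod_pos) (auto intro: prime_gt_0_nat)
  show ?thesis using fin A
  proof (induction A rule: finite_subset_induct')
    case empty
    have "norm (a 1 0) \<le> 1" using bnd by simp
    then show ?case using FM_one[of "a (Suc 0)"] by simp
  next
    case (insert p F)
    let ?e = "multiplicity p q"
    let ?P = "\<Prod>p\<in>F. p ^ multiplicity p q"
    have pp: "prime p" using insert by auto
    have Fsub: "F \<subseteq> prime_factors q" using insert by auto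
    have cop: "coprime (p ^ ?e) ?P"
    proof (rule prod_coprime_right)
      fix i assume i: "i \<in> F"
      then have "prime i" "i \<noteq> p" using insert Fsub by auto
      then have "coprime p i" using pp primes_coprime by blast
      then show "coprime (p ^ ?e) (i ^ multiplicity i q)" by simp
    qed
    have prodeq: "(\<Prod>p\<in>insert p F. p ^ multiplicity p q) = p ^ ?e * ?P"
      using insert by simp
    have Ddv: "p ^ ?e * ?P dvd q" using dv[of "insert p F"] insert prodeq by auto
    have d1: "p ^ ?e dvd q" using Ddv dvd_mult_left by blast
    have d2: "?P dvd q" using Ddv dvd_mult_right by blast
    have aeq: "a (p ^ ?e * ?P) = (\<lambda>r. a (p ^ ?e) r * a ?P r)"
    proof
      fix r show "a (p ^ ?e * ?P) r = a (p ^ ?e) r * a ?P r"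
        using mult Ddv cop by blast
    qed
    have "FM (p ^ ?e * ?P) (a (p ^ ?e * ?P)) \<le> FM (p ^ ?e) (a (p ^ ?e)) * FM ?P (a ?P)"
      unfolding aeq
      by (rule FM_mult) (use pp pos[OF Fsub] cop per d1 d2 prime_gt_0_nat in auto)
    also have "\<dots> \<le> FM (p ^ ?e) (a (p ^ ?e)) * (\<Prod>p\<in>F. FM (p ^ multiplicity p q) (a (p ^ multiplicity p q)))"
      by (intro mult_left_mono insert.IH FM_nonneg) (use pp prime_gt_0_nat in auto)
    finally show ?case unfolding prodeq using insert by simp
  qed
qed

lemma sin_lower:
  fixes y :: real assumes "0 \<le> y" "y \<le> pi / 2"
  shows "y / 2 \<le> sin y"
proof (cases "y \<le> pi / 3")
  case True
  have "(\<lambda>t. sin t - t / 2) 0 \<le> (\<lambda>t. sin t - t / 2) y"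
  proof (rule DERIV_nonneg_imp_nondecreasing[OF assms(1)])
    fix x assume x: "0 \<le> x" "x \<le> y"
    have "cos (pi / 3) \<le> cos x"
      using x True by (intro cos_monotone_0_pi_le) auto
    then have "cos x - 1 / 2 \<ge> 0" by (simp add: cos_60)
    moreover have "DERIV (\<lambda>t. sin t - t / 2) x :> cos x - 1 / 2"
      by (auto intro!: derivative_eq_intros)
    ultimately show "\<exists>d. DERIV (\<lambda>t. sin t - t / 2) x :> d \<and> d \<ge> 0" by blast
  qed
  then show ?thesis by simp
next
  case False
  have "sin (pi / 3) \<le> sin y"
    using False assms by (intro sin_monotone_2pi_le) auto
  then have s: "sqrt 3 / 2 \<le> sin y" by (simp add: sin_60)
  have "1.6 \<le> sqrt (3::real)"
    by (rule real_le_rsqrt) (simp add: power2_eq_square)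
  moreover have "y / 2 \<le> 0.8" using assms pi_approx by simp
  ultimately show ?thesis using s by simp
qed

lemma hpi: "0 \<le> t \<Longrightarrow> t \<le> pi * t / 2"
proof -
  assume t: "0 \<le> t"
  have "2 * t \<le> pi * t" using mult_right_mono[OF pi_ge_two t] .
  then show ?thesis by simp
qed

lemma sin_frac_lower:
  fixes b d :: nat assumes "0 < b" "b < d"
  shows "real (min b (d - b)) / real d \<le> \<bar>sin (pi * (real b / real d))\<bar>"
proof (cases "2 * b \<le> d")
  case True
  let ?y = "pi * (real b / real d)"
  have y0: "0 \<le> ?y" by simp
  have "?y \<le> pi / 2" using True assms by (simp add: field_simps)
  from sin_lower[OF y0 this] have "?y / 2 \<le> sin ?y" .
  moreover have "real b / real d \<le> ?y / 2"
    using hpi[of "real b / real d"] by simp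
  moreover have "min b (d - b) = b" using True by simp
  ultimately show ?thesis by simp
next
  case False
  let ?y = "pi * (real (d - b) / real d)"
  have y0: "0 \<le> ?y" by simp
  have "?y \<le> pi / 2" using False assms by (simp add: field_simps of_nat_diff)
  from sin_lower[OF y0 this] have "?y / 2 \<le> sin ?y" .
  moreover have "real (d - b) / real d \<le> ?y / 2"
    using hpi[of "real (d - b) / real d"] by simp
  moreover have "min b (d - b) = d - b" using False by simp
  moreover have "sin ?y = sin (pi * (real b / real d))"
  proof -
    have "?y = pi - pi * (real b / real d)" using assms by (simp add: field_simps of_nat_diff)
    then show ?thesis by simp
  qed
  ultimately show ?thesis by simp
qed

lemma interval_reindex:
  fixes M :: int
  shows "(\<Sum>n\<in>{M+1..M + int N}. g n) = (\<Sum>k<N. g (M + 1 + int k))"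
proof -
  have "{M+1..M + int N} = (\<lambda>k. M + 1 + int k) ` {..<N}"
  proof
    show "{M+1..M + int N} \<subseteq> (\<lambda>k. M + 1 + int k) ` {..<N}"
    proof
      fix x assume x: "x \<in> {M+1..M + int N}"
      then have "x = M + 1 + int (nat (x - M - 1))" "nat (x - M - 1) < N" by auto
      then show "x \<in> (\<lambda>k. M + 1 + int k) ` {..<N}" by blast
    qed
  qed auto
  moreover have "inj_on (\<lambda>k. M + 1 + int k) {..<N}" by (auto simp: inj_on_def)
  ultimately show ?thesis by (simp add: sum.reindex)
qed

lemma geo_bound:
  fixes z w :: complex
  assumes "norm z = 1" "norm w = 1" "z \<noteq> 1"
  shows "norm (\<Sum>k<N. w * z ^ k) \<le> 2 / norm (z - 1)"
proof -
  have "(\<Sum>k<N. w * z ^ k) = w * ((z ^ N - 1) / (z - 1))"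
    by (simp add: sum_distrib_left[symmetric] geometric_sum[OF assms(3)])
  then have "norm (\<Sum>k<N. w * z ^ k) = norm (z ^ N - 1) / norm (z - 1)"
    using assms by (simp add: norm_mult norm_divide)
  also have "\<dots> \<le> 2 / norm (z - 1)"
  proof (rule divide_right_mono)
    have "norm (z ^ N - 1) \<le> norm (z ^ N) + norm (1::complex)" by (rule norm_triangle_ineq4)
    then show "norm (z ^ N - 1) \<le> 2" using assms by (simp add: norm_power)
  qed simp
  finally show ?thesis .
qed

lemma G_bound_N:
  fixes M :: int
  shows "norm (\<Sum>n\<in>{M+1..M + int N}. ee (g n)) \<le> real N"
proof -
  have "norm (\<Sum>n\<in>{M+1..M + int N}. ee (g n)) \<le> (\<Sum>n\<in>{M+1..M + int N}. norm (ee (g n)))"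
    by (rule norm_sum)
  also have "\<dots> = real N" by simp
  finally show ?thesis .
qed

lemma G_bound:
  fixes M :: int and b d :: nat
  assumes "0 < b" "b < d"
  shows "norm (\<Sum>n\<in>{M+1..M + int N}. ee (of_int (- (int b * n)) / real d))
     \<le> real d / real b + real d / real (d - b)"
proof -
  define z where "z = ee (- (real b / real d))"
  define w where "w = ee (- (real b * real_of_int (M + 1) / real d))"
  have eq: "ee (of_int (- (int b * (M + 1 + int k))) / real d) = w * z ^ k" for k
  proof -
    have "real_of_int (- (int b * (M + 1 + int k))) / real d
        = - (real b * real_of_int (M + 1) / real d) + real k * - (real b / real d)"
    proof -
      have "real_of_int (- (int b * (M + 1 + int k))) = - (real b * real_of_int (M + 1)) + real k * - (real b)"
        by (simp add: algebra_simps)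
      then show ?thesis by (simp add: diff_divide_distrib add_divide_distrib)
    qed
    then show ?thesis unfolding z_def w_def ee_pow ee_add[symmetric] by (rule arg_cong)
  qed
  have nz: "norm (z - 1) = 2 * \<bar>sin (pi * (real b / real d))\<bar>"
  proof -
    have "norm (z - 1) = norm (cnj (z - 1))" by (simp only: complex_mod_cnj)
    also have "cnj (z - 1) = ee (real b / real d) - 1" unfolding z_def ee_minus by simp
    also have "norm (ee (real b / real d) - 1) = 2 * \<bar>sin (pi * (real b / real d))\<bar>" by (rule norm_ee_sub1)
    finally show ?thesis .
  qed
  have mpos: "0 < min b (d - b)" using assms by simp
  have lower: "2 * real (min b (d - b)) / real d \<le> norm (z - 1)"
  proof -
    have "2 * real (min b (d - b)) / real d = 2 * (real (min b (d - b)) / real d)" by simp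
    then show ?thesis using sin_frac_lower[OF assms] nz by linarith
  qed
  have zpos: "0 < norm (z - 1)"
  proof -
    have "0 < 2 * real (min b (d - b)) / real d" using mpos assms by simp
    then show ?thesis using lower by linarith
  qed
  have "norm (\<Sum>n\<in>{M+1..M + int N}. ee (of_int (- (int b * n)) / real d)) = norm (\<Sum>k<N. w * z ^ k)"
    unfolding interval_reindex eq ..
  also have "\<dots> \<le> 2 / norm (z - 1)"
    by (rule geo_bound) (use zpos in \<open>auto simp: z_def w_def\<close>)
  also have "\<dots> \<le> 2 / (2 * real (min b (d - b)) / real d)"
    by (rule divide_left_mono[OF lower]) (use mpos assms zpos in \<open>auto intro!: mult_pos_pos divide_pos_pos\<close>)
  also have "\<dots> = real d / real (min b (d - b))" by simp
  also have "\<dots> \<le> real d / real b + real d / real (d - b)"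
  proof (cases "b \<le> d - b")
    case True
    then have e: "real d / real (min b (d - b)) = real d / real b" by simp
    show ?thesis unfolding e by simp
  next
    case False
    then have e: "real d / real (min b (d - b)) = real d / real (d - b)" by simp
    show ?thesis unfolding e by simp
  qed
  finally show ?thesis .
qed

lemma sum_inv_harm:
  assumes "d > 0" shows "(\<Sum>j\<in>{1..<d}. 1 / real j) = harm (d - 1)"
proof -
  have "{1..<d} = {1..d-1}" using assms by auto
  then show ?thesis by (simp add: harm_def inverse_eq_divide)
qed

lemma sum_inv_rev: "(\<Sum>j\<in>{1..<d}. 1 / real (d - j)) = (\<Sum>j\<in>{1..<d}. 1 / real j)"
  by (rule sum.reindex_bij_witness[where i="\<lambda>j. d - j" and j="\<lambda>j. d - j"]) auto

lemma main_bound: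
  fixes M :: int and N d :: nat and f :: "int \<Rightarrow> complex"
  assumes d: "d > 0" and per: "\<forall>n. f (n + int d) = f n"
  shows "norm (\<Sum>n\<in>{M+1..M + int N}. f n) \<le> FM d f * (real N + 2 * real d * harm (d - 1))"
proof -
  define G where "G b = (\<Sum>n\<in>{M+1..M + int N}. ee (of_int (- (b * n)) / real d))" for b
  have "(\<Sum>n\<in>{M+1..M + int N}. f n)
      = (\<Sum>n\<in>{M+1..M + int N}. \<Sum>b\<in>{0..<int d}. fc d f b * ee (of_int (- (b * n)) / real d))"
    by (rule sum.cong[OF refl], rule inversion[OF d per])
  also have "\<dots> = (\<Sum>b\<in>{0..<int d}. fc d f b * G b)"
    unfolding G_def by (subst sum.swap) (simp add: sum_distrib_left)
  finally have S: "(\<Sum>n\<in>{M+1..M + int N}. f n) = (\<Sum>b\<in>{0..<int d}. fc d f b * G b)" .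
  have "norm (\<Sum>b\<in>{0..<int d}. fc d f b * G b) \<le> (\<Sum>b\<in>{0..<int d}. norm (fc d f b * G b))"
    by (rule norm_sum)
  also have "\<dots> \<le> (\<Sum>b\<in>{0..<int d}. FM d f * norm (G b))"
    by (rule sum_mono) (simp add: norm_mult mult_right_mono norm_fc_le_FM[OF d])
  also have "\<dots> = FM d f * (\<Sum>j<d. norm (G (int j)))"
    by (simp add: sum_distrib_left sum_int_range)
  also have "\<dots> \<le> FM d f * (real N + 2 * real d * harm (d - 1))"
  proof (rule mult_left_mono[OF _ FM_nonneg[OF d]])
    have split: "{..<d} = insert 0 {1..<d}" using d by auto
    have "(\<Sum>j<d. norm (G (int j))) = norm (G 0) + (\<Sum>j\<in>{1..<d}. norm (G (int j)))"
      unfolding split by simp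
    also have "\<dots> \<le> real N + (\<Sum>j\<in>{1..<d}. real d * (1 / real j) + real d * (1 / real (d - j)))"
    proof (rule add_mono)
      show "norm (G 0) \<le> real N" unfolding G_def by (rule G_bound_N)
      show "(\<Sum>j\<in>{1..<d}. norm (G (int j))) \<le> (\<Sum>j\<in>{1..<d}. real d * (1 / real j) + real d * (1 / real (d - j)))"
      proof (rule sum_mono)
        fix j assume j: "j \<in> {1..<d}"
        have "norm (G (int j)) \<le> real d / real j + real d / real (d - j)"
          unfolding G_def by (rule G_bound) (use j in auto)
        then show "norm (G (int j)) \<le> real d * (1 / real j) + real d * (1 / real (d - j))" by simp
      qed
    qed
    also have "\<dots> = real N + 2 * real d * harm (d - 1)"
    proof -
      have "(\<Sum>j\<in>{1..<d}. real d * (1 / real j) + real d * (1 / real (d - j)))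
          = real d * (\<Sum>j\<in>{1..<d}. 1 / real j) + real d * (\<Sum>j\<in>{1..<d}. 1 / real (d - j))"
        by (simp only: sum.distrib sum_distrib_left)
      also have "\<dots> = 2 * real d * harm (d - 1)"
        unfolding sum_inv_rev sum_inv_harm[OF d] by simp
      finally show ?thesis by simp
    qed
    finally show "(\<Sum>j<d. norm (G (int j))) \<le> real N + 2 * real d * harm (d - 1)" .
  qed
  finally show ?thesis unfolding S .
qed

lemma harm_bound:
  assumes "q > 0" shows "2 * real q * harm (q - 1) \<le> 6 * (real q * ln (real q))"
proof (cases "q = 1")
  case True then show ?thesis by (simp add: harm_def)
next
  case False
  then have q2: "q \<ge> 2" using assms by simp
  have "harm (q - 1) - ln (real (q - 1)) \<le> harm 1 - ln (real (1::nat))"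
    by (rule euler_mascheroni_sequence_decreasing) (use q2 in auto)
  then have h1: "harm (q - 1) \<le> 1 + ln (real (q - 1))" by (simp add: harm_def)
  have "ln (real (q - 1)) \<le> ln (real q)" using q2 by (subst ln_le_cancel_iff) auto
  moreover have "1 / 2 \<le> ln (real q)"
  proof -
    have "1 / 2 = ln (exp (1 / 2 :: real))" by simp
    also have "\<dots> \<le> ln 2" using exp_half_le2 by (subst ln_le_cancel_iff) auto
    also have "\<dots> \<le> ln (real q)" using q2 by (subst ln_le_cancel_iff) auto
    finally show ?thesis .
  qed
  ultimately have "harm (q - 1) \<le> 3 * ln (real q)" using h1 by linarith
  then have "real q * harm (q - 1) \<le> real q * (3 * ln (real q))"
    by (rule mult_left_mono) simp
  then show ?thesis by simp
qed

theorem lemma6p1: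
  "\<exists>C::real. C > 0 \<and>
    (\<forall>(q::nat) (a::nat \<Rightarrow> int \<Rightarrow> complex) (M::int) (N::nat).
      q > 0 \<longrightarrow> N > 0 \<longrightarrow>
      (\<forall>d n. d dvd q \<longrightarrow> a d (n + int d) = a d n) \<longrightarrow>
      (\<forall>d n. d dvd q \<longrightarrow> norm (a d n) \<le> 1) \<longrightarrow>
      (\<forall>d1 d2 n. d1 * d2 dvd q \<longrightarrow> coprime d1 d2 \<longrightarrow>
          a (d1 * d2) n = a d1 n * a d2 n) \<longrightarrow>
      (1 / real N) * norm (\<Sum>n\<in>{M+1..M + int N}. a q n)
        \<le> C * (1 + real q * ln (real q) / real N) *
          (\<Prod>p\<in>prime_factors q.
             Max ((\<lambda>b::int. norm ((1 / real (p ^ multiplicity p q)) *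
                 (\<Sum>r\<in>{0..<int (p ^ multiplicity p q)}.
                    a (p ^ multiplicity p q) r *
                    ee (real_of_int (b * r) / real (p ^ multiplicity p q)))))
               ` {0..<int (p ^ multiplicity p q)})))"
proof (intro exI[of _ "6::real"] conjI allI impI)
  show "(0::real) < 6" by simp
  fix q :: nat and a :: "nat \<Rightarrow> int \<Rightarrow> complex" and M :: int and N :: nat
  assume q: "q > 0" and Npos: "N > 0"
    and per: "\<forall>d n. d dvd q \<longrightarrow> a d (n + int d) = a d n"
    and bnd: "\<forall>d n. d dvd q \<longrightarrow> norm (a d n) \<le> 1"
    and mult: "\<forall>d1 d2 n. d1 * d2 dvd q \<longrightarrow> coprime d1 d2 \<longrightarrow> a (d1 * d2) n = a d1 n * a d2 n"
  let ?S = "norm (\<Sum>n\<in>{M+1..M + int N}. a q n)"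
  let ?F = "FM q (a q)"
  let ?L = "real q * ln (real q)"
  have perq: "\<forall>n. a q (n + int q) = a q n" using per by simp
  have F0: "0 \<le> ?F" by (rule FM_nonneg[OF q])
  have L0: "0 \<le> ?L" using q by simp
  have "?S \<le> ?F * (real N + 2 * real q * harm (q - 1))"
    by (rule main_bound[OF q perq])
  also have "\<dots> \<le> ?F * (real N + 6 * ?L)"
    by (rule mult_left_mono[OF _ F0]) (use harm_bound[OF q] in simp)
  finally have S1: "?S \<le> ?F * (real N + 6 * ?L)" .
  have "(1 / real N) * ?S \<le> (1 / real N) * (?F * (real N + 6 * ?L))"
    by (rule mult_left_mono[OF S1]) simp
  also have "\<dots> = ?F * (1 + 6 * ?L / real N)"
    using Npos by (simp add: field_simps)
  also have "\<dots> \<le> ?F * (6 * (1 + ?L / real N))"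
  proof (rule mult_left_mono[OF _ F0])
    have "0 \<le> ?L / real N" using L0 by simp
    then show "1 + 6 * ?L / real N \<le> 6 * (1 + ?L / real N)" by simp
  qed
  finally have S2: "(1 / real N) * ?S \<le> 6 * (1 + ?L / real N) * ?F" by (simp add: mult_ac)
  have "?F = FM (\<Prod>p\<in>prime_factors q. p ^ multiplicity p q) (a (\<Prod>p\<in>prime_factors q. p ^ multiplicity p q))"
    using prime_factorization_nat[OF q] by simp
  also have "\<dots> \<le> (\<Prod>p\<in>prime_factors q. FM (p ^ multiplicity p q) (a (p ^ multiplicity p q)))"
    by (rule FM_prod[OF q per bnd mult]) simp
  finally have Fle: "?F \<le> (\<Prod>p\<in>prime_factors q. FM (p ^ multiplicity p q) (a (p ^ multiplicity p q)))" .
  have "6 * (1 + ?L / real N) * ?F \<le> 6 * (1 + ?L / real N) * (\<Prod>p\<in>prime_factors q. FM (p ^ multiplicity p q) (a (p ^ multiplicity p q)))"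
    by (rule mult_left_mono[OF Fle]) (use L0 in simp)
  with S2 have "(1 / real N) * ?S \<le> 6 * (1 + ?L / real N) * (\<Prod>p\<in>prime_factors q. FM (p ^ multiplicity p q) (a (p ^ multiplicity p q)))"
    by linarith
  then show "(1 / real N) * ?S \<le> 6 * (1 + real q * ln (real q) / real N) *
          (\<Prod>p\<in>prime_factors q.
             Max ((\<lambda>b::int. norm ((1 / real (p ^ multiplicity p q)) *
                 (\<Sum>r\<in>{0..<int (p ^ multiplicity p q)}.
                    a (p ^ multiplicity p q) r *
                    ee (real_of_int (b * r) / real (p ^ multiplicity p q)))))
               ` {0..<int (p ^ multiplicity p q)}))"
    unfolding FM_def fc_def by simp
qed

end
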